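(* Let $0<\rho<\mu$, let $\beta$ be the unique real with $\rho(\beta)=\rho$, let $\ell\in\mathbb{N}$ be such that $t=\ell\rho$ is an integer, and let $0<\varepsilon<1$. Let $X_\beta$ have distribution $P_\beta$ and set $$\delta=\ell^{1/2}\,\frac{\mathrm{Var}(\mathrm{wt}_{\mathcal{A}}(X_\beta))^{1/2}}{(1-\varepsilon)^{1/2}},$$ and assume $\delta>0$. Then $$\max_{\substack{j\in\mathbb{Z}\\ -\delta<j<\delta}}\frac{1}{\ell}\log_q\bigl|\mathcal{S}^\ell_{t+j}\bigr|\ \ge\ H_\rho-\frac{|\beta|\delta}{\ell}-\frac{1}{\ell}\log_q\!\left(\frac{2\lceil\delta\rceil-1}{\varepsilon}\right).$$ Moreover, for fixed $\rho$ and $\varepsilon$, the right-hand side converges to $H_\rho$ as $\ell\to\infty$ (along $\ell$ with $\ell\rho\in\mathbb{Z}$).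
   Context: Let $q>1$ be fixed. Let $\mathcal{A}$ be a finite abelian group with $|\mathcal{A}|\ge 2$ and $\mathrm{wt}_{\mathcal{A}}:\mathcal{A}\to\mathbb{Z}_{\ge 0}$ a weight function with $\mathrm{wt}_{\mathcal{A}}(a)=0$ iff $a=0$, extended additively to $\mathcal{A}^\ell$ by $\mathrm{wt}_{\Sigma\mathcal{A}}(v)=\sum_{i=1}^\ell\mathrm{wt}_{\mathcal{A}}(v_i)$. For an integer $s$, $\mathcal{S}^\ell_s=\{v\in\mathcal{A}^\ell:\mathrm{wt}_{\Sigma\mathcal{A}}(v)=s\}$. Let $\mu=\max_a\mathrm{wt}_{\mathcal{A}}(a)$. For $\beta\in\mathbb{R}$ let $P_\beta(a)=q^{-\beta\,\mathrm{wt}_{\mathcal{A}}(a)}/\mathcal{Z}(\beta)$, $\mathcal{Z}(\beta)=\sum_aq^{-\beta\,\mathrm{wt}_{\mathcal{A}}(a)}$, $\rho(\beta)=\sum_aP_\beta(a)\mathrm{wt}_{\mathcal{A}}(a)$; $\rho$ is a bijection $\mathbb{R}\to(0,\mu)$. For $\rho=\rho(\beta)$, $H_\rho=-\sum_{a:P_\beta(a)\ne0}P_\beta(a)\log_qP_\beta(a)$. Convention: $\log_q 0=-\infty$. *)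

theory Defs
  imports "HOL-Analysis.Analysis"
begin

text \<open>The alphabet is a finite abelian group, rendered as a type of classes
finite and ab_group_add; the weight is wt :: 'a => nat.  Words of length l are
lists of length l.\<close>

definition wt_sum :: "('a \<Rightarrow> nat) \<Rightarrow> 'a list \<Rightarrow> nat" where
  "wt_sum wt v = (\<Sum>i<length v. wt (v ! i))"

definition sphere :: "('a \<Rightarrow> nat) \<Rightarrow> nat \<Rightarrow> int \<Rightarrow> 'a list set" where
  "sphere wt l s = {v. length v = l \<and> int (wt_sum wt v) = s}"

definition mu :: "('a::finite \<Rightarrow> nat) \<Rightarrow> nat" where
  "mu wt = Max (range wt)"

definition partZ :: "real \<Rightarrow> ('a::finite \<Rightarrow> nat) \<Rightarrow> real \<Rightarrow> real" where
  "partZ q wt \<beta> = (\<Sum>a\<in>UNIV. q powr (- \<beta> * real (wt a)))"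

definition Pbeta :: "real \<Rightarrow> ('a::finite \<Rightarrow> nat) \<Rightarrow> real \<Rightarrow> 'a \<Rightarrow> real" where
  "Pbeta q wt \<beta> a = q powr (- \<beta> * real (wt a)) / partZ q wt \<beta>"

definition rho_of :: "real \<Rightarrow> ('a::finite \<Rightarrow> nat) \<Rightarrow> real \<Rightarrow> real" where
  "rho_of q wt \<beta> = (\<Sum>a\<in>UNIV. Pbeta q wt \<beta> a * real (wt a))"

definition entropy_of :: "real \<Rightarrow> ('a::finite \<Rightarrow> nat) \<Rightarrow> real \<Rightarrow> real" where
  "entropy_of q wt \<beta> =
     - (\<Sum>a\<in>{a. Pbeta q wt \<beta> a \<noteq> 0}. Pbeta q wt \<beta> a * log q (Pbeta q wt \<beta> a))"

definition var_of :: "real \<Rightarrow> ('a::finite \<Rightarrow> nat) \<Rightarrow> real \<Rightarrow> real" where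
  "var_of q wt \<beta> = (\<Sum>a\<in>UNIV. Pbeta q wt \<beta> a * (real (wt a) - rho_of q wt \<beta>)\<^sup>2)"

definition delta_of :: "real \<Rightarrow> ('a::finite \<Rightarrow> nat) \<Rightarrow> real \<Rightarrow> real \<Rightarrow> nat \<Rightarrow> real" where
  "delta_of q wt \<beta> \<epsilon> l = sqrt (real l) * sqrt (var_of q wt \<beta>) / sqrt (1 - \<epsilon>)"

definition rhs_bound :: "real \<Rightarrow> ('a::finite \<Rightarrow> nat) \<Rightarrow> real \<Rightarrow> real \<Rightarrow> nat \<Rightarrow> real" where
  "rhs_bound q wt \<beta> \<epsilon> l =
     entropy_of q wt \<beta> - \<bar>\<beta>\<bar> * delta_of q wt \<beta> \<epsilon> l / real l
     - log q ((2 * real_of_int \<lceil>delta_of q wt \<beta> \<epsilon> l\<rceil> - 1) / \<epsilon>) / real l"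

end

theory Submission
  imports Defs
begin

lemma wt_sum_Cons: "wt_sum wt (a # v) = wt a + wt_sum wt v"
proof -
  have "\<And>v. wt_sum wt v = sum_list (map wt v)"
    unfolding wt_sum_def by (simp add: sum_list_sum_nth atLeast0LessThan)
  then show ?thesis by simp
qed

lemma sum_lists_Suc:
  fixes f :: "'a::finite list \<Rightarrow> 'b::comm_monoid_add"
  shows "(\<Sum>v\<in>{v. length v = Suc n}. f v) = (\<Sum>a\<in>UNIV. \<Sum>v\<in>{v. length v = n}. f (a#v))"
proof -
  have eq: "{v::'a list. length v = Suc n} = (\<lambda>(a,v). a#v) ` (UNIV \<times> {v. length v = n})"
    by (auto simp: length_Suc_conv image_iff)
  have inj: "inj_on (\<lambda>(a,v). a#v) (UNIV \<times> {v::'a list. length v = n})"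
    by (auto simp: inj_on_def)
  show ?thesis
    unfolding eq sum.reindex[OF inj]
    by (simp add: sum.cartesian_product split_def)
qed

lemma sum_lists_exp:
  fixes wt :: "'a::finite \<Rightarrow> nat" and q \<beta> :: real
  assumes q: "q > 0"
  shows "(\<Sum>v\<in>{v. length v = n}. q powr (- \<beta> * real (wt_sum wt v))) = partZ q wt \<beta> ^ n"
proof (induction n)
  case 0 then show ?case using q by (simp add: wt_sum_def)
next
  case (Suc n)
  have "(\<Sum>v\<in>{v. length v = Suc n}. q powr (- \<beta> * real (wt_sum wt v)))
     = (\<Sum>a\<in>UNIV. \<Sum>v\<in>{v. length v = n}. q powr (- \<beta> * real (wt a)) * q powr (- \<beta> * real (wt_sum wt v)))"
    unfolding sum_lists_Suc
  proof (intro sum.cong refl)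
    fix a v
    have "- \<beta> * real (wt_sum wt (a#v)) = - \<beta> * real (wt a) + - \<beta> * real (wt_sum wt v)"
      by (simp add: wt_sum_Cons algebra_simps)
    then show "q powr (- \<beta> * real (wt_sum wt (a#v))) = q powr (- \<beta> * real (wt a)) * q powr (- \<beta> * real (wt_sum wt v))"
      by (simp only: powr_add)
  qed
  also have "\<dots> = (\<Sum>a\<in>UNIV. q powr (- \<beta> * real (wt a)) * (\<Sum>v\<in>{v. length v = n}. q powr (- \<beta> * real (wt_sum wt v))))"
    by (simp only: sum_distrib_left)
  also have "\<dots> = (\<Sum>a\<in>UNIV. q powr (- \<beta> * real (wt a))) * partZ q wt \<beta> ^ n"
    by (simp only: Suc.IH sum_distrib_right)
  finally show ?case by (simp add: partZ_def)
qed

lemma sum_lists_var: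
  fixes wt :: "'a::finite \<Rightarrow> nat" and q \<beta> r :: real
  assumes q: "q > 0"
    and m1: "(\<Sum>a\<in>UNIV. q powr (- \<beta> * real (wt a)) * (real (wt a) - r)) = 0"
  shows "(\<Sum>v\<in>{v. length v = n}. q powr (- \<beta> * real (wt_sum wt v)) * (real (wt_sum wt v) - n * r)^2)
     = n * (\<Sum>a\<in>UNIV. q powr (- \<beta> * real (wt a)) * (real (wt a) - r)^2) * partZ q wt \<beta> ^ (n - 1)"
proof (induction n)
  case 0 then show ?case by (simp add: wt_sum_def)
next
  case (Suc n)
  define e where "e a = q powr (- \<beta> * real (wt a))" for a
  define E where "E v = q powr (- \<beta> * real (wt_sum wt v))" for v
  define W where "W v = real (wt_sum wt v)" for v
  define L where "L = {v::'a list. length v = n}"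
  define V where "V = (\<Sum>a\<in>UNIV. e a * (real (wt a) - r)^2)"
  define Z where "Z = partZ q wt \<beta>"
  have Z: "Z = (\<Sum>a\<in>UNIV. e a)" by (simp add: Z_def partZ_def e_def)
  have IH: "(\<Sum>v\<in>L. E v * (W v - n*r)^2) = n * V * Z^(n-1)"
    using Suc.IH by (simp add: E_def W_def L_def V_def e_def Z_def)
  have SE: "(\<Sum>v\<in>L. E v) = Z^n" using sum_lists_exp[OF q] by (simp add: E_def L_def Z_def)
  have m1': "(\<Sum>a\<in>UNIV. e a * (real (wt a) - r)) = 0" using m1 by (simp add: e_def)
  have "(\<Sum>v\<in>{v. length v = Suc n}. E v * (W v - Suc n * r)^2)
     = (\<Sum>a\<in>UNIV. \<Sum>v\<in>L. e a * E v * ((real (wt a) - r)^2 + 2 * (real (wt a) - r) * (W v - n*r) + (W v - n*r)^2))"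
    unfolding sum_lists_Suc L_def
  proof (intro sum.cong refl)
    fix a v
    have "- \<beta> * real (wt_sum wt (a#v)) = - \<beta> * real (wt a) + - \<beta> * real (wt_sum wt v)"
      by (simp add: wt_sum_Cons algebra_simps)
    then have E1: "E (a#v) = e a * E v" unfolding E_def e_def by (simp only: powr_add)
    have W1: "W (a#v) = real (wt a) + W v" by (simp add: W_def wt_sum_Cons)
    show "E (a#v) * (W (a#v) - Suc n * r)^2 = e a * E v * ((real (wt a) - r)^2 + 2 * (real (wt a) - r) * (W v - n*r) + (W v - n*r)^2)"
      unfolding E1 W1 by (simp add: power2_eq_square algebra_simps)
  qed
  also have "\<dots> = (\<Sum>a\<in>UNIV. e a * (real (wt a) - r)^2 * (\<Sum>v\<in>L. E v)
        + 2 * (e a * (real (wt a) - r)) * (\<Sum>v\<in>L. E v * (W v - n*r)) + e a * (\<Sum>v\<in>L. E v * (W v - n*r)^2))"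
  proof (intro sum.cong refl)
    fix a
    let ?A = "(real (wt a) - r)^2" and ?B = "real (wt a) - r"
    have "(\<Sum>v\<in>L. e a * E v * (?A + 2 * ?B * (W v - n*r) + (W v - n*r)^2))
       = (\<Sum>v\<in>L. e a * ?A * E v + 2 * (e a * ?B) * (E v * (W v - n*r)) + e a * (E v * (W v - n*r)^2))"
      by (intro sum.cong refl) (simp add: algebra_simps)
    also have "\<dots> = e a * ?A * (\<Sum>v\<in>L. E v) + 2 * (e a * ?B) * (\<Sum>v\<in>L. E v * (W v - n*r)) + e a * (\<Sum>v\<in>L. E v * (W v - n*r)^2)"
      by (simp add: sum.distrib sum_distrib_left)
    finally show "(\<Sum>v\<in>L. e a * E v * (?A + 2 * ?B * (W v - n*r) + (W v - n*r)^2)) = e a * ?A * (\<Sum>v\<in>L. E v) + 2 * (e a * ?B) * (\<Sum>v\<in>L. E v * (W v - n*r)) + e a * (\<Sum>v\<in>L. E v * (W v - n*r)^2)" .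
  qed
  also have "\<dots> = V * Z^n + 2 * (\<Sum>a\<in>UNIV. e a * (real (wt a) - r)) * (\<Sum>v\<in>L. E v * (W v - n*r)) + Z * (n * V * Z^(n-1))"
    by (simp add: sum.distrib sum_distrib_right[symmetric] sum_distrib_left[symmetric] IH SE V_def Z
         flip: sum_distrib_right)
  also have "\<dots> = Suc n * V * Z^n"
    using m1' by (cases n) (auto simp: algebra_simps)
  finally show ?case by (simp add: E_def W_def V_def e_def Z_def)
qed

theorem mainTheorem8:
  fixes q :: real and wt :: "'a::{finite, ab_group_add} \<Rightarrow> nat"
    and \<rho> \<beta> \<epsilon> :: real
  assumes q: "q > 1"
    and card: "CARD('a) \<ge> 2"
    and wt0: "\<And>a. wt a = 0 \<longleftrightarrow> a = 0"
    and rho_pos: "0 < \<rho>" and rho_lt: "\<rho> < real (mu wt)"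
    and beta: "rho_of q wt \<beta> = \<rho>"
    and eps: "0 < \<epsilon>" "\<epsilon> < 1"
  shows "(\<forall>(l::nat) (t::int). real l * \<rho> = real_of_int t \<longrightarrow> delta_of q wt \<beta> \<epsilon> l > 0 \<longrightarrow>
            (\<exists>j::int. - delta_of q wt \<beta> \<epsilon> l < real_of_int j \<and> real_of_int j < delta_of q wt \<beta> \<epsilon> l
               \<and> card (sphere wt l (t + j)) > 0
               \<and> log q (real (card (sphere wt l (t + j)))) / real l \<ge> rhs_bound q wt \<beta> \<epsilon> l))
       \<and> filterlim (rhs_bound q wt \<beta> \<epsilon>) (nhds (entropy_of q wt \<beta>))
           (inf sequentially (principal {l. real l * \<rho> \<in> \<int>}))"
proof -
  define e where "e a = q powr (- \<beta> * real (wt a))" for a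
  define Z where "Z = partZ q wt \<beta>"
  define V where "V = (\<Sum>a\<in>UNIV. e a * (real (wt a) - \<rho>)^2)"
  define var where "var = var_of q wt \<beta>"
  define H where "H = entropy_of q wt \<beta>"
  have q0: "q > 0" using q by simp
  have epos: "e a > 0" for a using q by (simp add: e_def)
  have ZS: "Z = (\<Sum>a\<in>UNIV. e a)" by (simp add: Z_def partZ_def e_def)
  have Zpos: "Z > 0" unfolding ZS by (rule sum_pos2[where i=0]) (auto intro: less_imp_le epos)
  have P: "Pbeta q wt \<beta> a = e a / Z" for a by (simp add: Pbeta_def e_def Z_def)
  have SP: "(\<Sum>a\<in>UNIV. e a / Z) = 1" using Zpos by (simp add: ZS flip: sum_divide_distrib)
  have rhoZ: "(\<Sum>a\<in>UNIV. e a * real (wt a)) = \<rho> * Z"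
  proof -
    have "\<rho> = (\<Sum>a\<in>UNIV. e a * real (wt a)) / Z"
      using beta by (simp add: rho_of_def P sum_divide_distrib)
    then show ?thesis using Zpos by (simp add: field_simps)
  qed
  have m1: "(\<Sum>a\<in>UNIV. q powr (- \<beta> * real (wt a)) * (real (wt a) - \<rho>)) = 0"
  proof -
    have "(\<Sum>a\<in>UNIV. e a * (real (wt a) - \<rho>)) = (\<Sum>a\<in>UNIV. e a * real (wt a)) - \<rho> * Z"
      by (simp add: right_diff_distrib sum_subtractf ZS sum_distrib_left mult.commute)
    then show ?thesis using rhoZ by (simp add: e_def)
  qed
  have varV: "var = V / Z"
    by (simp add: var_def var_of_def P beta V_def sum_divide_distrib)
  have Vpos: "V > 0" unfolding V_def
  proof (rule sum_pos2[where i=0])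
    have "wt 0 = 0" using wt0 by simp
    then show "0 < e 0 * (real (wt 0) - \<rho>)^2" using epos[of 0] rho_pos by simp
  qed (auto intro!: mult_nonneg_nonneg less_imp_le[OF epos])
  have varpos: "var > 0" using varV Vpos Zpos by simp
  have Hform: "H = \<beta> * \<rho> + log q Z"
  proof -
    have "Pbeta q wt \<beta> a \<noteq> 0" for a using epos[of a] Zpos by (simp add: P)
    then have nz: "{a. Pbeta q wt \<beta> a \<noteq> 0} = UNIV" by auto
    have lg: "log q (e a / Z) = - \<beta> * real (wt a) - log q Z" for a
      using epos[of a] Zpos q by (simp add: log_divide e_def)
    have "H = - (\<Sum>a\<in>UNIV. e a / Z * (- \<beta> * real (wt a) - log q Z))"
      unfolding H_def entropy_of_def nz by (simp add: P lg)
    also have "\<dots> = \<beta> * ((\<Sum>a\<in>UNIV. e a * real (wt a)) / Z) + log q Z * (\<Sum>a\<in>UNIV. e a / Z)"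
      by (simp add: algebra_simps sum_subtractf sum.distrib sum_distrib_left sum_divide_distrib sum_negf)
    also have "\<dots> = \<beta> * \<rho> + log q Z" using rhoZ Zpos SP by simp
    finally show ?thesis .
  qed

  have part1: "\<forall>(l::nat) (t::int). real l * \<rho> = real_of_int t \<longrightarrow> delta_of q wt \<beta> \<epsilon> l > 0 \<longrightarrow>
            (\<exists>j::int. - delta_of q wt \<beta> \<epsilon> l < real_of_int j \<and> real_of_int j < delta_of q wt \<beta> \<epsilon> l
               \<and> card (sphere wt l (t + j)) > 0
               \<and> log q (real (card (sphere wt l (t + j)))) / real l \<ge> rhs_bound q wt \<beta> \<epsilon> l)"
  proof (intro allI impI)
    fix l :: nat and t :: int
    assume lt: "real l * \<rho> = real_of_int t" and dpos: "delta_of q wt \<beta> \<epsilon> l > 0"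
    define \<delta> where "\<delta> = delta_of q wt \<beta> \<epsilon> l"
    have \<delta>pos: "\<delta> > 0" using dpos by (simp add: \<delta>_def)
    have lpos: "l > 0" using dpos by (cases l) (auto simp: delta_of_def)
    have \<delta>sq: "\<delta>^2 = real l * var / (1 - \<epsilon>)"
      using varpos eps by (simp add: \<delta>_def delta_of_def var_def power_divide power_mult_distrib)
    define D where "D = {v::'a list. length v = l}"
    have finD: "finite D" using finite_lists_length_eq[of "UNIV::'a set" l] by (simp add: D_def)
    define W where "W v = real (wt_sum wt v)" for v
    define p where "p v = q powr (- \<beta> * W v) / Z^l" for v
    have ppos: "p v > 0" for v using Zpos q by (simp add: p_def)
    have Sp: "(\<Sum>v\<in>D. p v) = 1"
      using sum_lists_exp[OF q0, where n=l and wt=wt and \<beta>=\<beta>] Zpos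
      by (simp add: p_def D_def W_def Z_def flip: sum_divide_distrib)
    have Svar: "(\<Sum>v\<in>D. p v * (W v - t)^2) = real l * var"
    proof -
      have A: "(\<Sum>v\<in>D. q powr (- \<beta> * W v) * (W v - t)^2) = real l * V * Z^(l-1)"
        using sum_lists_var[OF q0 m1, where n=l] lt by (simp add: D_def W_def V_def e_def Z_def)
      have "(\<Sum>v\<in>D. p v * (W v - t)^2) = (\<Sum>v\<in>D. q powr (- \<beta> * W v) * (W v - t)^2) / Z^l"
        by (simp add: p_def sum_divide_distrib)
      also have "\<dots> = real l * V * Z^(l-1) / (Z * Z^(l-1))"
        using A lpos by (cases l) auto
      also have "\<dots> = real l * var" using Zpos by (simp add: varV)
      finally show ?thesis .
    qed
    define G where "G = {v\<in>D. \<bar>W v - t\<bar> < \<delta>}"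
    have GD: "G \<subseteq> D" by (auto simp: G_def)
    have "(\<Sum>v\<in>D-G. p v) \<le> (\<Sum>v\<in>D-G. p v * (W v - t)^2 / \<delta>^2)"
    proof (rule sum_mono)
      fix v assume "v \<in> D - G"
      then have "\<delta> \<le> \<bar>W v - t\<bar>" by (auto simp: G_def)
      then have "\<delta>^2 \<le> \<bar>W v - t\<bar>^2" using \<delta>pos by (intro power_mono) auto
      then have "\<delta>^2 \<le> (W v - t)^2" by simp
      then have "1 \<le> (W v - t)^2 / \<delta>^2" using \<delta>pos by simp
      then show "p v \<le> p v * (W v - t)^2 / \<delta>^2"
        using ppos[of v] mult_left_mono[of 1 "(W v - t)^2 / \<delta>^2" "p v"] by simp
    qed
    also have "\<dots> \<le> (\<Sum>v\<in>D. p v * (W v - t)^2 / \<delta>^2)"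
      by (rule sum_mono2[OF finD]) (auto intro!: divide_nonneg_nonneg mult_nonneg_nonneg less_imp_le[OF ppos])
    also have "\<dots> = real l * var / \<delta>^2" by (simp add: Svar flip: sum_divide_distrib)
    also have "\<dots> = 1 - \<epsilon>" using \<delta>sq \<delta>pos eps by (simp add: field_simps)
    finally have DG: "(\<Sum>v\<in>D-G. p v) \<le> 1 - \<epsilon>" .
    have "(\<Sum>v\<in>D. p v) = (\<Sum>v\<in>D-G. p v) + (\<Sum>v\<in>G. p v)"
      by (rule sum.subset_diff[OF GD finD])
    then have SG: "(\<Sum>v\<in>G. p v) \<ge> \<epsilon>" using DG Sp by simp
    define c where "c = \<lceil>\<delta>\<rceil>"
    have c1: "c \<ge> 1" using \<delta>pos by (simp add: c_def le_ceiling_iff)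
    define J where "J = {1-c..c-1}"
    have Jiff: "j \<in> J \<longleftrightarrow> - \<delta> < real_of_int j \<and> real_of_int j < \<delta>" for j
    proof -
      have "j \<le> c - 1 \<longleftrightarrow> real_of_int j < \<delta>" unfolding c_def using less_ceiling_iff[of j \<delta>] by linarith
      moreover have "1 - c \<le> j \<longleftrightarrow> - \<delta> < real_of_int j" unfolding c_def using less_ceiling_iff[of "-j" \<delta>] by linarith
      ultimately show ?thesis by (auto simp: J_def)
    qed
    have finJ: "finite J" by (simp add: J_def)
    have cardJ: "real (card J) = 2 * real_of_int c - 1" using c1 by (simp add: J_def)
    have Jne: "J \<noteq> {}" using c1 by (auto simp: J_def)
    define g where "g v = int (wt_sum wt v) - t" for v
    have gW: "real_of_int (g v) = W v - t" for v by (simp add: g_def W_def)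
    have gG: "g ` G \<subseteq> J" by (auto simp: Jiff G_def gW)
    define N where "N j = card (sphere wt l (t + j))" for j
    define r where "r j = q powr (- \<beta> * (t + j)) / Z^l" for j :: int
    have rpos: "r j > 0" for j using Zpos q by (simp add: r_def)
    have grp: "(\<Sum>j\<in>J. \<Sum>v\<in>{v\<in>G. g v = j}. p v) = (\<Sum>v\<in>G. p v)"
      by (rule sum.group[OF finite_subset[OF GD finD] finJ gG])
    have inner: "(\<Sum>v\<in>{v\<in>G. g v = j}. p v) = real (N j) * r j" if "j \<in> J" for j
    proof -
      have seq: "{v\<in>G. g v = j} = sphere wt l (t + j)"
        using that by (auto simp: G_def D_def sphere_def g_def Jiff gW[symmetric])
      have "(\<Sum>v\<in>sphere wt l (t + j). p v) = (\<Sum>v\<in>sphere wt l (t + j). r j)"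
      proof (intro sum.cong refl)
        fix v assume "v \<in> sphere wt l (t + j)"
        then have "int (wt_sum wt v) = t + j" by (simp add: sphere_def)
        then have "W v = real_of_int t + real_of_int j" unfolding W_def by (metis of_int_of_nat_eq of_int_add)
        then show "p v = r j" by (simp add: p_def r_def)
      qed
      then show ?thesis by (simp add: seq N_def)
    qed
    have SJ: "(\<Sum>j\<in>J. real (N j) * r j) \<ge> \<epsilon>" using SG grp inner by simp
    obtain j where jJ: "j \<in> J" and jbig: "real (N j) * r j \<ge> \<epsilon> / real (card J)"
    proof (rule ccontr)
      assume "\<not> thesis"
      then have "\<forall>j\<in>J. real (N j) * r j < \<epsilon> / real (card J)" using that by force
      then have "(\<Sum>j\<in>J. real (N j) * r j) < (\<Sum>j\<in>J. \<epsilon> / real (card J))"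
        by (intro sum_strict_mono finJ Jne) auto
      also have "\<dots> = \<epsilon>" using Jne finJ by simp
      finally show False using SJ by simp
    qed
    define m where "m = 2 * real_of_int c - 1"
    have mpos: "m > 0" using c1 by (simp add: m_def)
    have em: "\<epsilon> / m > 0" using mpos eps by simp
    have Nr: "real (N j) * r j \<ge> \<epsilon> / m" using jbig cardJ by (simp add: m_def)
    have Npos: "real (N j) > 0"
    proof (rule ccontr)
      assume "\<not> real (N j) > 0"
      then have "real (N j) = 0" by simp
      then show False using Nr em by simp
    qed
    have "\<epsilon> / m * Z^l * q powr (\<beta> * (t + j)) \<le> real (N j)"
    proof -
      have "r j * (Z^l * q powr (\<beta> * (t + j))) = 1"
        using Zpos q by (simp add: r_def powr_minus field_simps flip: powr_add)
      then have "\<epsilon> / m * Z^l * q powr (\<beta> * (t + j)) \<le> real (N j) * r j * (Z^l * q powr (\<beta> * (t + j)))"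
      proof -
        have pos: "Z^l * q powr (\<beta> * (t + j)) > 0" using Zpos q by simp
        show ?thesis using mult_right_mono[OF Nr less_imp_le[OF pos]] by (simp add: mult.assoc)
      qed
      also have "\<dots> = real (N j)" using \<open>r j * _ = 1\<close> by (simp add: mult.assoc)
      finally show ?thesis by (simp add: mult.assoc)
    qed
    then have "log q (\<epsilon> / m * Z^l * q powr (\<beta> * (t + j))) \<le> log q (real (N j))"
      using q Npos em Zpos eps mpos by (subst log_le_cancel_iff) auto
    moreover have "log q (\<epsilon> / m * Z^l * q powr (\<beta> * (t + j))) = log q \<epsilon> - log q m + real l * log q Z + \<beta> * (t + j)"
      using q em Zpos eps mpos by (simp add: log_mult_pos log_divide log_nat_power)
    ultimately have L1: "log q (real (N j)) \<ge> log q \<epsilon> - log q m + real l * log q Z + \<beta> * (t + j)" by simp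
    have bj: "\<beta> * real_of_int j \<ge> - \<bar>\<beta>\<bar> * \<delta>"
    proof -
      have "\<bar>real_of_int j\<bar> < \<delta>" using jJ Jiff by auto
      then have "\<bar>\<beta>\<bar> * \<bar>real_of_int j\<bar> \<le> \<bar>\<beta>\<bar> * \<delta>" by (intro mult_left_mono) auto
      moreover have "- (\<bar>\<beta>\<bar> * \<bar>real_of_int j\<bar>) \<le> \<beta> * real_of_int j"
        by (metis abs_ge_minus_self abs_mult minus_le_iff)
      ultimately show ?thesis by linarith
    qed
    have lH: "real l * H = \<beta> * t + real l * log q Z" using Hform lt by (simp add: algebra_simps flip: lt)
    have logm: "log q (m / \<epsilon>) = log q m - log q \<epsilon>" using mpos eps by (simp add: log_divide)
    have main: "real l * rhs_bound q wt \<beta> \<epsilon> l \<le> log q (real (N j))"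
    proof -
      have "real l * rhs_bound q wt \<beta> \<epsilon> l = real l * H - \<bar>\<beta>\<bar> * \<delta> - log q (m / \<epsilon>)"
        using lpos by (simp add: rhs_bound_def H_def \<delta>_def m_def c_def field_simps)
      also have "\<dots> \<le> log q (real (N j))" using L1 bj lH logm by (simp add: algebra_simps)
      finally show ?thesis .
    qed
    show "\<exists>j::int. - delta_of q wt \<beta> \<epsilon> l < real_of_int j \<and> real_of_int j < delta_of q wt \<beta> \<epsilon> l
               \<and> card (sphere wt l (t + j)) > 0
               \<and> log q (real (card (sphere wt l (t + j)))) / real l \<ge> rhs_bound q wt \<beta> \<epsilon> l"
    proof (intro exI conjI)
      show "- delta_of q wt \<beta> \<epsilon> l < real_of_int j" "real_of_int j < delta_of q wt \<beta> \<epsilon> l"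
        using jJ Jiff by (auto simp: \<delta>_def)
      show "card (sphere wt l (t + j)) > 0" using Npos by (simp add: N_def)
      show "log q (real (card (sphere wt l (t + j)))) / real l \<ge> rhs_bound q wt \<beta> \<epsilon> l"
        using main lpos by (simp add: N_def field_simps)
    qed
  qed

  define s where "s = sqrt var / sqrt (1 - \<epsilon>)"
  have spos: "s > 0" using varpos eps by (simp add: s_def)
  have dl: "delta_of q wt \<beta> \<epsilon> l = s * sqrt (real l)" for l
    by (simp add: delta_of_def s_def var_def)
  define A where "A l = \<bar>\<beta>\<bar> * s * sqrt (inverse (real l))" for l :: nat
  define B where "B l = log q ((2 * real_of_int \<lceil>s * sqrt (real l)\<rceil> - 1) / \<epsilon>) / real l" for l :: nat
  have rb: "rhs_bound q wt \<beta> \<epsilon> = (\<lambda>l. H - A l - B l)"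
  proof
    fix l :: nat
    have "sqrt (real l) / real l = sqrt (inverse (real l))"
      by (simp add: sqrt_divide_self_eq real_sqrt_inverse)
    then have "\<bar>\<beta>\<bar> * (s * sqrt (real l)) / real l = \<bar>\<beta>\<bar> * s * sqrt (inverse (real l))"
      by (metis mult.assoc times_divide_eq_right)
    then show "rhs_bound q wt \<beta> \<epsilon> l = H - A l - B l"
      by (simp add: rhs_bound_def dl A_def B_def H_def)
  qed
  have A0: "A \<longlonglongrightarrow> 0"
  proof -
    have "(\<lambda>l. sqrt (inverse (real l))) \<longlonglongrightarrow> sqrt 0"
      by (intro tendsto_real_sqrt lim_inverse_n)
    then have "(\<lambda>l. \<bar>\<beta>\<bar> * s * sqrt (inverse (real l))) \<longlonglongrightarrow> \<bar>\<beta>\<bar> * s * 0"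
      by (intro tendsto_mult tendsto_const) simp
    moreover have "A = (\<lambda>l. \<bar>\<beta>\<bar> * s * sqrt (inverse (real l)))" by (rule ext) (simp add: A_def)
    ultimately show ?thesis by simp
  qed
  define K where "K = log q ((2 * s + 1) / \<epsilon>)"
  define h where "h l = K * inverse (real l) + (1 / (2 * ln q)) * (ln (real l) / real l)" for l :: nat
  have h0: "h \<longlonglongrightarrow> 0"
  proof -
    have "h \<longlonglongrightarrow> K * 0 + (1 / (2 * ln q)) * 0"
      unfolding h_def by (intro tendsto_add tendsto_mult tendsto_const lim_inverse_n lim_ln_over_n)
    then show ?thesis by simp
  qed
  have Bbounds: "0 \<le> B l \<and> B l \<le> h l" if l1: "l \<ge> 1" for l :: nat
  proof -
    define x where "x = s * sqrt (real l)"
    have sl: "sqrt (real l) \<ge> 1" using l1 by simp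
    have xpos: "x > 0" using spos l1 by (simp add: x_def)
    have c1: "\<lceil>x\<rceil> \<ge> 1" using xpos by (simp add: le_ceiling_iff)
    have cx: "real_of_int \<lceil>x\<rceil> \<le> x + 1" by linarith
    have X1: "1 \<le> 2 * real_of_int \<lceil>x\<rceil> - 1"
    proof -
      have "real_of_int \<lceil>x\<rceil> \<ge> 1" using c1 by linarith
      then show ?thesis by linarith
    qed
    have X2: "2 * real_of_int \<lceil>x\<rceil> - 1 \<le> (2 * s + 1) * sqrt (real l)"
    proof -
      have e: "(2 * s + 1) * sqrt (real l) = 2 * x + sqrt (real l)" by (simp add: x_def algebra_simps)
      show ?thesis using cx sl e by linarith
    qed
    define X where "X = (2 * real_of_int \<lceil>x\<rceil> - 1) / \<epsilon>"
    have Xge: "X \<ge> 1" unfolding X_def using eps by (subst le_divide_eq_1_pos) (use X1 eps in linarith)+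
    have Xle: "X \<le> (2 * s + 1) / \<epsilon> * sqrt (real l)"
    proof -
      have "X \<le> ((2 * s + 1) * sqrt (real l)) / \<epsilon>" unfolding X_def using X2 eps by (intro divide_right_mono) auto
      then show ?thesis by simp
    qed
    have lX0: "0 \<le> log q X" using Xge q by simp
    have "log q X \<le> log q ((2 * s + 1) / \<epsilon> * sqrt (real l))"
      using Xle Xge q spos eps sl by (subst log_le_cancel_iff) auto
    also have "\<dots> = K + log q (sqrt (real l))"
      unfolding K_def by (rule log_mult_pos) (use spos eps l1 in auto)
    also have "log q (sqrt (real l)) = ln (real l) / (2 * ln q)"
      by (simp add: log_def ln_sqrt)
    finally have lXle: "log q X \<le> K + ln (real l) / (2 * ln q)" .
    have lpos: "real l > 0" using l1 by simp
    have BX: "B l = log q X / real l" by (simp add: B_def X_def x_def)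
    have "B l \<le> (K + ln (real l) / (2 * ln q)) / real l"
      unfolding BX using lXle lpos by (simp add: divide_right_mono)
    also have "\<dots> = K / real l + ln (real l) / (2 * ln q) / real l" by (rule add_divide_distrib)
    also have "\<dots> = h l" unfolding h_def by (simp only: divide_inverse mult_1_left mult_ac)
    finally show ?thesis using lX0 lpos BX by simp
  qed
  have B0: "B \<longlonglongrightarrow> 0"
  proof (rule tendsto_sandwich[OF _ _ tendsto_const h0])
    show "eventually (\<lambda>l. 0 \<le> B l) sequentially"
      using eventually_ge_at_top[of "1::nat"] by eventually_elim (use Bbounds in auto)
    show "eventually (\<lambda>l. B l \<le> h l) sequentially"
      using eventually_ge_at_top[of "1::nat"] by eventually_elim (use Bbounds in auto)
  qed
  have "(\<lambda>l. H - A l - B l) \<longlonglongrightarrow> H - 0 - 0"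
    by (intro tendsto_diff tendsto_const A0 B0)
  then have lim: "(rhs_bound q wt \<beta> \<epsilon> \<longlongrightarrow> H) sequentially" by (simp add: rb)
  have part2: "filterlim (rhs_bound q wt \<beta> \<epsilon>) (nhds (entropy_of q wt \<beta>))
           (inf sequentially (principal {l. real l * \<rho> \<in> \<int>}))"
    using filterlim_mono[OF lim order_refl inf_le1] by (simp add: H_def)
  show ?thesis using part1 part2 by blast
qed

end
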